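(* Assume the setting described in the context (in particular $f=\frac1n\sum_{i=1}^n f_i$ is convex and $L$-smooth with minimizer $\mathbf{x}^\star$, the stochastic gradients have variance at most $\sigma^2$, the gradient dissimilarity is at most $\zeta^2$, and the compressor $\mathcal{C}_R$ satisfies $\mathbb{E}\|\mathcal{C}_R(\mathbf{x})-\mathbf{x}\|^2\le (1-\delta)^R\|\mathbf{x}\|^2$). Let $(\mathbf{y}_t)$, $(\mathbf{g}^i_t)$, $(\hat{\mathbf{g}}^i_t)$ be generated by NEOLITHIC with positive step weights $(a_t)_{t\ge1}$, and for $t\ge 0$ let $$E_{t+1}:=\mathbb{E}\Big\|\sum_{j=0}^{t-1} a_{j+1}\Big(\mathbf{g}_j-\frac1n\sum_{i=1}^n\hat{\mathbf{g}}^i_j\Big)\Big\|^2,\qquad \mathbf{g}_j:=\frac1n\sum_{i=1}^n \mathbf{g}^i_j .$$ Then for every $T\ge1$ and every choice of nonnegative weights $w_1,\dots,w_T$, $$\sum_{t=0}^{T-1} w_{t+1}E_{t+1}\le (1-\delta)^R\zeta^2\sum_{t=0}^{T-1}w_{t+1}\,t\sum_{j=0}^{t-1}a_{j+1}^2+2L(1-\delta)^R\sum_{t=0}^{T-1}w_{t+1}\,t\sum_{j=0}^{t-1}a_{j+1}^2\,\mathbb{E}\big[\beta_f(\mathbf{y}_j,\mathbf{x}^\star)\big]+(1-\delta)^R\sigma^2\sum_{t=0}^{T-1}w_{t+1}\,t\sum_{j=0}^{t-1}a_{j+1}^2 .$$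
   Context: Setting: $f(\mathbf{x})=\frac1n\sum_{i=1}^n f_i(\mathbf{x})$ on $\mathbb{R}^d$, $f$ convex and $L$-smooth (gradient $L$-Lipschitz), with a minimizer $\mathbf{x}^\star$. Bregman divergence: $\beta_f(\mathbf{x},\mathbf{y}):=f(\mathbf{x})-f(\mathbf{y})-\langle\nabla f(\mathbf{y}),\mathbf{x}-\mathbf{y}\rangle$. Each client $i$ has a stochastic gradient oracle $\mathbf{g}_i(\mathbf{x},\xi)$ with $\mathbb{E}_\xi[\mathbf{g}_i(\mathbf{x},\xi)]=\nabla f_i(\mathbf{x})$ and $\mathbb{E}_\xi\|\mathbf{g}_i(\mathbf{x},\xi)-\nabla f_i(\mathbf{x})\|^2\le\sigma^2$ for all $\mathbf{x}$, with fresh independent samples at each query. Gradient similarity: $\frac1n\sum_{i=1}^n\|\nabla f_i(\mathbf{x})-\nabla f(\mathbf{x})\|^2\le\zeta^2$ for all $\mathbf{x}$. Compressor: a (possibly randomized) map $\mathcal{C}:\mathbb{R}^d\to\mathbb{R}^d$ is $\delta$-contractive ($\delta\in(0,1]$) if $\mathbb{E}\|\mathcal{C}(\mathbf{x})-\mathbf{x}\|^2\le(1-\delta)\|\mathbf{x}\|^2$ for all $\mathbf{x}$. The repeated compressor $\mathcal{C}_R$ (integer $R\ge1$) is defined by $\mathbf{c}_0=\mathbf{0}$, $\Delta_q=\mathcal{C}(\mathbf{x}-\mathbf{c}_{q-1})$, $\mathbf{c}_q=\mathbf{c}_{q-1}+\Delta_q$ for $q=1,\dots,R$, and $\mathcal{C}_R(\mathbf{x}):=\sum_{q=1}^R\Delta_q$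 (each $\Delta_q$ is one communication round). It is known that $\mathbb{E}\|\mathcal{C}_R(\mathbf{x})-\mathbf{x}\|^2\le(1-\delta)^R\|\mathbf{x}\|^2$ for all $\mathbf{x}$; compressor randomness is independent of everything else. NEOLITHIC: given $\mathbf{x}_0,\mathbf{v}_0$, $A_0\ge0$ and $a_t>0$, for $t=0,1,\dots$: $A_{t+1}=A_t+a_{t+1}$; $\mathbf{y}_t=\frac{A_t}{A_{t+1}}\mathbf{x}_t+\frac{a_{t+1}}{A_{t+1}}\mathbf{v}_t$; each client $i$ computes $\mathbf{g}^i_t=\mathbf{g}_i(\mathbf{y}_t,\xi^i_t)$ and $\hat{\mathbf{g}}^i_t=\mathcal{C}_R(\mathbf{g}^i_t)$, sent to the server; server sets $\hat{\mathbf{g}}_t=\frac1n\sum_i\hat{\mathbf{g}}^i_t$, $\mathbf{v}_{t+1}=\mathbf{v}_t-a_{t+1}\hat{\mathbf{g}}_t$, $\mathbf{x}_{t+1}=\frac{A_t}{A_{t+1}}\mathbf{x}_t+\frac{a_{t+1}}{A_{t+1}}\mathbf{v}_{t+1}$. *)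

theory Defs
  imports "HOL-Probability.Probability"
begin

definition bregman :: "('a::real_inner \<Rightarrow> real) \<Rightarrow> ('a \<Rightarrow> 'a) \<Rightarrow> 'a \<Rightarrow> 'a \<Rightarrow> real" where
  "bregman f gf x y = f x - f y - inner (gf y) (x - y)"

text \<open>Repeated compressor. The seed s q is the randomness of the q-th
  application of the base compressor C (round q = 1..R).
  rep_c C s x q is c_q; rep_compress C R s x = c_R = sum of Delta_1..Delta_R.\<close>
primrec rep_c :: "('c \<Rightarrow> 'a::real_vector \<Rightarrow> 'a) \<Rightarrow> (nat \<Rightarrow> 'c) \<Rightarrow> 'a \<Rightarrow> nat \<Rightarrow> 'a" where
  "rep_c C s x 0 = 0"
| "rep_c C s x (Suc q) = rep_c C s x q + C (s (Suc q)) (x - rep_c C s x q)"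

definition rep_compress :: "('c \<Rightarrow> 'a::real_vector \<Rightarrow> 'a) \<Rightarrow> nat \<Rightarrow> (nat \<Rightarrow> 'c) \<Rightarrow> 'a \<Rightarrow> 'a" where
  "rep_compress C R s x = rep_c C s x R"

text \<open>NEOLITHIC, as a deterministic function of the realized samples.
  n clients (indices 0..n-1); g i y e is client i's stochastic gradient oracle at y with
  sample e; xi i t is the sample drawn by client i at iteration t; s i t is the
  randomness of the repeated compressor used by client i at iteration t;
  a (t+1) are the step weights. neo_st .. t = (x_t, v_t, A_t).\<close>
primrec neo_st :: "nat \<Rightarrow> (nat \<Rightarrow> 'a::real_vector \<Rightarrow> 'x \<Rightarrow> 'a) \<Rightarrow> ('c \<Rightarrow> 'a \<Rightarrow> 'a) \<Rightarrow> nat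
    \<Rightarrow> (nat \<Rightarrow> real) \<Rightarrow> real \<Rightarrow> 'a \<Rightarrow> 'a \<Rightarrow> (nat \<Rightarrow> nat \<Rightarrow> 'x) \<Rightarrow> (nat \<Rightarrow> nat \<Rightarrow> nat \<Rightarrow> 'c)
    \<Rightarrow> nat \<Rightarrow> 'a \<times> 'a \<times> real" where
  "neo_st n g C R a A0 x0 v0 xi s 0 = (x0, v0, A0)"
| "neo_st n g C R a A0 x0 v0 xi s (Suc t) =
     (let (x, v, A) = neo_st n g C R a A0 x0 v0 xi s t;
          A' = A + a (Suc t);
          y = (A / A') *\<^sub>R x + (a (Suc t) / A') *\<^sub>R v;
          gh = (1 / real n) *\<^sub>R (\<Sum>i<n. rep_compress C R (s i t) (g i y (xi i t)));
          v' = v - a (Suc t) *\<^sub>R gh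
      in ((A / A') *\<^sub>R x + (a (Suc t) / A') *\<^sub>R v', v', A'))"

definition neo_y :: "nat \<Rightarrow> (nat \<Rightarrow> 'a::real_vector \<Rightarrow> 'x \<Rightarrow> 'a) \<Rightarrow> ('c \<Rightarrow> 'a \<Rightarrow> 'a) \<Rightarrow> nat
    \<Rightarrow> (nat \<Rightarrow> real) \<Rightarrow> real \<Rightarrow> 'a \<Rightarrow> 'a \<Rightarrow> (nat \<Rightarrow> nat \<Rightarrow> 'x) \<Rightarrow> (nat \<Rightarrow> nat \<Rightarrow> nat \<Rightarrow> 'c)
    \<Rightarrow> nat \<Rightarrow> 'a" where
  "neo_y n g C R a A0 x0 v0 xi s t =
     (let (x, v, A) = neo_st n g C R a A0 x0 v0 xi s t;
          A' = A + a (Suc t)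
      in (A / A') *\<^sub>R x + (a (Suc t) / A') *\<^sub>R v)"

definition neo_g :: "nat \<Rightarrow> (nat \<Rightarrow> 'a::real_vector \<Rightarrow> 'x \<Rightarrow> 'a) \<Rightarrow> ('c \<Rightarrow> 'a \<Rightarrow> 'a) \<Rightarrow> nat
    \<Rightarrow> (nat \<Rightarrow> real) \<Rightarrow> real \<Rightarrow> 'a \<Rightarrow> 'a \<Rightarrow> (nat \<Rightarrow> nat \<Rightarrow> 'x) \<Rightarrow> (nat \<Rightarrow> nat \<Rightarrow> nat \<Rightarrow> 'c)
    \<Rightarrow> nat \<Rightarrow> nat \<Rightarrow> 'a" where
  "neo_g n g C R a A0 x0 v0 xi s i t = g i (neo_y n g C R a A0 x0 v0 xi s t) (xi i t)"

definition neo_ghat :: "nat \<Rightarrow> (nat \<Rightarrow> 'a::real_vector \<Rightarrow> 'x \<Rightarrow> 'a) \<Rightarrow> ('c \<Rightarrow> 'a \<Rightarrow> 'a) \<Rightarrow> nat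
    \<Rightarrow> (nat \<Rightarrow> real) \<Rightarrow> real \<Rightarrow> 'a \<Rightarrow> 'a \<Rightarrow> (nat \<Rightarrow> nat \<Rightarrow> 'x) \<Rightarrow> (nat \<Rightarrow> nat \<Rightarrow> nat \<Rightarrow> 'c)
    \<Rightarrow> nat \<Rightarrow> nat \<Rightarrow> 'a" where
  "neo_ghat n g C R a A0 x0 v0 xi s i t =
     rep_compress C R (s i t) (neo_g n g C R a A0 x0 v0 xi s i t)"

end

theory Submission
  imports Defs
begin

lemma norm_sum_sq:
  fixes v :: "'i \<Rightarrow> 'a::real_normed_vector"
  shows "(norm (\<Sum>j\<in>I. v j))\<^sup>2 \<le> real (card I) * (\<Sum>j\<in>I. (norm (v j))\<^sup>2)"
proof -
  have "(norm (\<Sum>j\<in>I. v j))\<^sup>2 \<le> (\<Sum>j\<in>I. norm (v j))\<^sup>2"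
    by (intro power_mono norm_sum) auto
  also have "\<dots> \<le> (\<Sum>j\<in>I. (norm (v j))\<^sup>2) * card I"
    by (rule sum_squared_le_sum_of_squares)
  finally show ?thesis by (simp add: mult.commute)
qed

lemma descent:
  fixes f :: "'a::real_inner \<Rightarrow> real"
  assumes der: "\<And>x. (f has_derivative (\<lambda>h. inner (gf x) h)) (at x)"
    and lip: "\<And>x y. norm (gf x - gf y) \<le> L * norm (x - y)"
  shows "f (y + h) \<le> f y + inner (gf y) h + L / 2 * (norm h)\<^sup>2"
proof -
  define \<phi> where "\<phi> t = f (y + t *\<^sub>R h) - t * inner (gf y) h - L / 2 * t\<^sup>2 * (norm h)\<^sup>2" for t
  have "\<phi> 0 \<ge> \<phi> 1"
  proof (rule DERIV_nonpos_imp_nonincreasing[where f=\<phi> and a=0 and b=1])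
    fix t :: real assume t: "0 \<le> t" "t \<le> 1"
    have d1: "((\<lambda>t. f (y + t *\<^sub>R h)) has_derivative (\<lambda>s. inner (gf (y + t *\<^sub>R h)) (s *\<^sub>R h))) (at t)"
      by (rule has_derivative_compose[OF _ der]) (auto intro!: derivative_eq_intros)
    have "((\<lambda>t. f (y + t *\<^sub>R h)) has_real_derivative inner (gf (y + t *\<^sub>R h)) h) (at t)"
    proof -
      have e: "(\<lambda>s. inner (gf (y + t *\<^sub>R h)) (s *\<^sub>R h)) = (*) (inner (gf (y + t *\<^sub>R h)) h)"
        by (auto simp: fun_eq_iff)
      show ?thesis using d1 unfolding e has_field_derivative_def .
    qed
    then have "(\<phi> has_real_derivative inner (gf (y + t *\<^sub>R h)) h - inner (gf y) h - L / 2 * (2 * t) * (norm h)\<^sup>2) (at t)"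
      unfolding \<phi>_def[abs_def] by (auto intro!: derivative_eq_intros)
    moreover have "inner (gf (y + t *\<^sub>R h)) h - inner (gf y) h - L / 2 * (2 * t) * (norm h)\<^sup>2 \<le> 0"
    proof -
      have "inner (gf (y + t *\<^sub>R h)) h - inner (gf y) h = inner (gf (y + t *\<^sub>R h) - gf y) h"
        by (simp add: inner_diff_left)
      also have "\<dots> \<le> norm (gf (y + t *\<^sub>R h) - gf y) * norm h" by (rule norm_cauchy_schwarz)
      also have "\<dots> \<le> L * norm (t *\<^sub>R h) * norm h"
        using lip[of "y + t *\<^sub>R h" y] by (intro mult_right_mono) auto
      also have "\<dots> = L * t * (norm h)\<^sup>2" using t by (simp add: power2_eq_square)
      finally show ?thesis by simp
    qed
    ultimately show "\<exists>D. (\<phi> has_real_derivative D) (at t) \<and> D \<le> 0" by blast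
  qed simp
  then show ?thesis unfolding \<phi>_def by simp
qed

lemma grad_facts:
  fixes f :: "'a::euclidean_space \<Rightarrow> real"
  assumes der: "\<And>x. (f has_derivative (\<lambda>h. inner (gf x) h)) (at x)"
    and lip: "\<And>x y. norm (gf x - gf y) \<le> L * norm (x - y)"
    and min: "\<And>x. f xstar \<le> f x"
  shows "0 \<le> L" "gf xstar = 0" "(norm (gf y))\<^sup>2 \<le> 2 * L * (f y - f xstar)"
proof -
  obtain b :: 'a where b: "b \<in> Basis" using nonempty_Basis by blast
  have "0 \<le> norm (gf b - gf 0)" by simp
  also have "\<dots> \<le> L * norm (b - 0)" by (rule lip)
  finally show L0: "0 \<le> L" using b by simp
  have gen: "(norm (gf y))\<^sup>2 \<le> 2 * L * (f y - f xstar)" if "L > 0" for y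
  proof -
    have "f xstar \<le> f (y + (- (1/L)) *\<^sub>R gf y)" by (rule min)
    also have "\<dots> \<le> f y + inner (gf y) ((- (1/L)) *\<^sub>R gf y) + L / 2 * (norm ((- (1/L)) *\<^sub>R gf y))\<^sup>2"
      by (rule descent[OF der lip])
    also have "\<dots> = f y - (norm (gf y))\<^sup>2 / (2 * L)"
      using that by (simp add: power2_norm_eq_inner power2_eq_square field_simps flip: power2_norm_eq_inner)
    finally have "(norm (gf y))\<^sup>2 / (2 * L) \<le> f y - f xstar" by simp
    then show ?thesis using that by (simp add: field_simps)
  qed
  show gx: "gf xstar = 0"
  proof (cases "L > 0")
    case True
    from gen[OF True, of xstar] have "(norm (gf xstar))\<^sup>2 \<le> 0" by simp
    then show ?thesis by simp
  next
    case False
    with L0 have L: "L = 0" by simp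
    have "f xstar \<le> f (xstar + (- 1) *\<^sub>R gf xstar)" by (rule min)
    also have "\<dots> \<le> f xstar + inner (gf xstar) ((- 1) *\<^sub>R gf xstar) + L / 2 * (norm ((- 1) *\<^sub>R gf xstar))\<^sup>2"
      by (rule descent[OF der lip])
    also have "\<dots> = f xstar - (norm (gf xstar))\<^sup>2"
      using L by (simp add: power2_norm_eq_inner)
    finally have "(norm (gf xstar))\<^sup>2 \<le> 0" by simp
    then show ?thesis by simp
  qed
  show "(norm (gf y))\<^sup>2 \<le> 2 * L * (f y - f xstar)"
  proof (cases "L > 0")
    case True then show ?thesis by (rule gen)
  next
    case False
    with L0 have L: "L = 0" by simp
    have "norm (gf y - gf xstar) \<le> 0" using lip[of y xstar] L by simp
    then show ?thesis using gx L by simp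
  qed
qed

lemma sum_sq_dev:
  fixes a :: "nat \<Rightarrow> 'a::real_inner"
  assumes n: "n > 0"
  shows "(\<Sum>i<n. (norm (a i - (1 / real n) *\<^sub>R (\<Sum>i<n. a i)))\<^sup>2)
       = (\<Sum>i<n. (norm (a i))\<^sup>2) - real n * (norm ((1 / real n) *\<^sub>R (\<Sum>i<n. a i)))\<^sup>2"
proof -
  define m where "m = (1 / real n) *\<^sub>R (\<Sum>i<n. a i)"
  have S: "(\<Sum>i<n. a i) = real n *\<^sub>R m" using n by (simp add: m_def)
  have "(\<Sum>i<n. (norm (a i - m))\<^sup>2) = (\<Sum>i<n. (norm (a i))\<^sup>2 - 2 * inner (a i) m + (norm m)\<^sup>2)"
    by (intro sum.cong refl) (simp add: power2_norm_eq_inner inner_diff_left inner_diff_right inner_commute)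
  also have "\<dots> = (\<Sum>i<n. (norm (a i))\<^sup>2) - 2 * inner (\<Sum>i<n. a i) m + real n * (norm m)\<^sup>2"
    by (simp add: sum.distrib sum_subtractf inner_sum_left sum_distrib_left)
  also have "\<dots> = (\<Sum>i<n. (norm (a i))\<^sup>2) - real n * (norm m)\<^sup>2"
    unfolding S by (simp add: power2_norm_eq_inner)
  finally show ?thesis unfolding m_def .
qed

lemma neo_st_Suc':
  "neo_st n g C R a A0 x0 v0 xi s (Suc t) =
    (let p = neo_st n g C R a A0 x0 v0 xi s t; x = fst p; v = fst (snd p); A = snd (snd p);
         A' = A + a (Suc t);
         y = (A / A') *\<^sub>R x + (a (Suc t) / A') *\<^sub>R v;
         gh = (1 / real n) *\<^sub>R (\<Sum>i<n. rep_compress C R (s i t) (g i y (xi i t)));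
         v' = v - a (Suc t) *\<^sub>R gh
      in ((A / A') *\<^sub>R x + (a (Suc t) / A') *\<^sub>R v', v', A'))"
  by (simp add: Let_def split_beta)

lemma neo_y':
  "neo_y n g C R a A0 x0 v0 xi s t =
    (let p = neo_st n g C R a A0 x0 v0 xi s t; x = fst p; v = fst (snd p); A = snd (snd p);
         A' = A + a (Suc t) in (A / A') *\<^sub>R x + (a (Suc t) / A') *\<^sub>R v)"
  by (simp add: neo_y_def Let_def split_beta)

lemma neo_st_cong:
  "(\<And>i t'. i < n \<Longrightarrow> t' < t \<Longrightarrow> xi i t' = xi' i t' \<and> s i t' = s' i t') \<Longrightarrow>
    neo_st n g C R a A0 x0 v0 xi s t = neo_st n g C R a A0 x0 v0 xi' s' t"
proof (induction t)
  case 0 then show ?case by simp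
next
  case (Suc t)
  then have IH: "neo_st n g C R a A0 x0 v0 xi s t = neo_st n g C R a A0 x0 v0 xi' s' t" by simp
  have E: "\<And>i. i \<in> {..<n} \<Longrightarrow> xi i t = xi' i t \<and> s i t = s' i t" using Suc.prems by simp
  have S: "(\<Sum>i<n. rep_compress C R (s i t) (g i Y (xi i t))) = (\<Sum>i<n. rep_compress C R (s' i t) (g i Y (xi' i t)))" for Y
    by (rule sum.cong) (auto simp: E)
  show ?case unfolding neo_st_Suc' IH Let_def S ..
qed

lemma neo_y_cong:
  assumes "\<And>i t'. i < n \<Longrightarrow> t' < t \<Longrightarrow> xi i t' = xi' i t' \<and> s i t' = s' i t'"
  shows "neo_y n g C R a A0 x0 v0 xi s t = neo_y n g C R a A0 x0 v0 xi' s' t"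
proof -
  have "neo_st n g C R a A0 x0 v0 xi s t = neo_st n g C R a A0 x0 v0 xi' s' t"
    by (rule neo_st_cong) (use assms in auto)
  then show ?thesis unfolding neo_y' by simp
qed

lemma neo_st_meas:
  fixes g :: "nat \<Rightarrow> 'a::euclidean_space \<Rightarrow> 'x \<Rightarrow> 'a"
  assumes g_meas: "\<And>i. i < n \<Longrightarrow> (\<lambda>(y, e). g i y e) \<in> borel_measurable (borel \<Otimes>\<^sub>M D i)"
    and CR_meas: "(\<lambda>(u, x). rep_compress C R u x) \<in> borel_measurable (Q \<Otimes>\<^sub>M borel)"
    and XS: "\<And>i t'. i < n \<Longrightarrow> t' < t \<Longrightarrow> (\<lambda>\<omega>. (XI \<omega> i t', SI \<omega> i t')) \<in> measurable N (D i \<Otimes>\<^sub>M Q)"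
  shows "(\<lambda>\<omega>. fst (neo_st n g C R a A0 x0 v0 (XI \<omega>) (SI \<omega>) t)) \<in> borel_measurable N \<and>
         (\<lambda>\<omega>. fst (snd (neo_st n g C R a A0 x0 v0 (XI \<omega>) (SI \<omega>) t))) \<in> borel_measurable N \<and>
         (\<lambda>\<omega>. snd (snd (neo_st n g C R a A0 x0 v0 (XI \<omega>) (SI \<omega>) t))) \<in> borel_measurable N"
  using XS
proof (induction t)
  case 0 then show ?case by simp
next
  case (Suc t)
  have XS': "\<And>i t'. i < n \<Longrightarrow> t' < t \<Longrightarrow> (\<lambda>\<omega>. (XI \<omega> i t', SI \<omega> i t')) \<in> measurable N (D i \<Otimes>\<^sub>M Q)"
    using Suc.prems by simp
  note IH = Suc.IH[OF XS']
  define X where "X \<omega> = fst (neo_st n g C R a A0 x0 v0 (XI \<omega>) (SI \<omega>) t)" for \<omega>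
  define V where "V \<omega> = fst (snd (neo_st n g C R a A0 x0 v0 (XI \<omega>) (SI \<omega>) t))" for \<omega>
  define A where "A \<omega> = snd (snd (neo_st n g C R a A0 x0 v0 (XI \<omega>) (SI \<omega>) t))" for \<omega>
  have mX[measurable]: "X \<in> borel_measurable N" and mV[measurable]: "V \<in> borel_measurable N"
    and mA[measurable]: "A \<in> borel_measurable N"
    using IH unfolding X_def V_def A_def by auto
  define Y where "Y \<omega> = (A \<omega> / (A \<omega> + a (Suc t))) *\<^sub>R X \<omega> + (a (Suc t) / (A \<omega> + a (Suc t))) *\<^sub>R V \<omega>" for \<omega>
  have mY: "Y \<in> borel_measurable N" unfolding Y_def by measurable
  have mi: "(\<lambda>\<omega>. rep_compress C R (SI \<omega> i t) (g i (Y \<omega>) (XI \<omega> i t))) \<in> borel_measurable N"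
    if i: "i < n" for i
  proof -
    have p: "(\<lambda>\<omega>. (XI \<omega> i t, SI \<omega> i t)) \<in> measurable N (D i \<Otimes>\<^sub>M Q)" using Suc.prems i by simp
    have x: "(\<lambda>\<omega>. XI \<omega> i t) \<in> measurable N (D i)" using measurable_compose[OF p measurable_fst] by simp
    have sv: "(\<lambda>\<omega>. SI \<omega> i t) \<in> measurable N Q" using measurable_compose[OF p measurable_snd] by simp
    have gm: "(\<lambda>\<omega>. g i (Y \<omega>) (XI \<omega> i t)) \<in> borel_measurable N"
      using measurable_compose[OF measurable_Pair[OF mY x] g_meas[OF i]] by simp
    show ?thesis
      using measurable_compose[OF measurable_Pair[OF sv gm] CR_meas] by simp
  qed
  have ms: "(\<lambda>\<omega>. \<Sum>i<n. rep_compress C R (SI \<omega> i t) (g i (Y \<omega>) (XI \<omega> i t))) \<in> borel_measurable N"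
    using mi by (intro borel_measurable_sum) auto
  define V' where "V' \<omega> = V \<omega> - a (Suc t) *\<^sub>R ((1 / real n) *\<^sub>R (\<Sum>i<n. rep_compress C R (SI \<omega> i t) (g i (Y \<omega>) (XI \<omega> i t))))" for \<omega>
  have mV': "V' \<in> borel_measurable N" unfolding V'_def using ms by measurable
  have eq: "neo_st n g C R a A0 x0 v0 (XI \<omega>) (SI \<omega>) (Suc t) =
     ((A \<omega> / (A \<omega> + a (Suc t))) *\<^sub>R X \<omega> + (a (Suc t) / (A \<omega> + a (Suc t))) *\<^sub>R V' \<omega>, V' \<omega>, A \<omega> + a (Suc t))" for \<omega>
    unfolding neo_st_Suc' X_def V_def A_def V'_def Y_def Let_def by simp
  show ?case unfolding eq using mV' by simp
qed

lemma neo_y_meas: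
  fixes g :: "nat \<Rightarrow> 'a::euclidean_space \<Rightarrow> 'x \<Rightarrow> 'a"
  assumes g_meas: "\<And>i. i < n \<Longrightarrow> (\<lambda>(y, e). g i y e) \<in> borel_measurable (borel \<Otimes>\<^sub>M D i)"
    and CR_meas: "(\<lambda>(u, x). rep_compress C R u x) \<in> borel_measurable (Q \<Otimes>\<^sub>M borel)"
    and XS: "\<And>i t'. i < n \<Longrightarrow> t' < t \<Longrightarrow> (\<lambda>\<omega>. (XI \<omega> i t', SI \<omega> i t')) \<in> measurable N (D i \<Otimes>\<^sub>M Q)"
  shows "(\<lambda>\<omega>. neo_y n g C R a A0 x0 v0 (XI \<omega>) (SI \<omega>) t) \<in> borel_measurable N"
proof -
  note m = neo_st_meas[OF g_meas CR_meas XS]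
  have [measurable]: "(\<lambda>\<omega>. fst (neo_st n g C R a A0 x0 v0 (XI \<omega>) (SI \<omega>) t)) \<in> borel_measurable N"
     "(\<lambda>\<omega>. fst (snd (neo_st n g C R a A0 x0 v0 (XI \<omega>) (SI \<omega>) t))) \<in> borel_measurable N"
     "(\<lambda>\<omega>. snd (snd (neo_st n g C R a A0 x0 v0 (XI \<omega>) (SI \<omega>) t))) \<in> borel_measurable N"
    using m by auto
  show ?thesis unfolding neo_y' Let_def by measurable
qed

lemma second_moment:
  fixes G :: "'x \<Rightarrow> 'a::euclidean_space"
  assumes D: "prob_space D" and ub: "has_bochner_integral D G m"
    and var: "(\<integral>\<^sup>+ e. ennreal ((norm (G e - m))\<^sup>2) \<partial>D) \<le> ennreal (\<sigma>\<^sup>2)"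
  shows "(\<integral>\<^sup>+ e. ennreal ((norm (G e))\<^sup>2) \<partial>D) \<le> ennreal ((norm m)\<^sup>2 + \<sigma>\<^sup>2)"
proof -
  interpret prob_space D by (rule D)
  have iG: "integrable D G" using ub by (auto simp: integrable.simps)
  have IG: "integral\<^sup>L D G = m" using ub by (rule has_bochner_integral_integral_eq)
  have mG[measurable]: "G \<in> borel_measurable D" using iG by auto
  define \<phi> where "\<phi> e = (norm (G e - m))\<^sup>2" for e
  have m\<phi>: "\<phi> \<in> borel_measurable D" unfolding \<phi>_def by measurable
  have i\<phi>: "integrable D \<phi>"
  proof (rule integrableI_nonneg[OF m\<phi>])
    show "AE x in D. 0 \<le> \<phi> x" by (simp add: \<phi>_def)
    have "(\<integral>\<^sup>+ x. ennreal (\<phi> x) \<partial>D) \<le> ennreal (\<sigma>\<^sup>2)" using var by (simp add: \<phi>_def)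
    also have "\<dots> < \<infinity>" by simp
    finally show "(\<integral>\<^sup>+ x. ennreal (\<phi> x) \<partial>D) < \<infinity>" .
  qed
  have I\<phi>: "integral\<^sup>L D \<phi> \<le> \<sigma>\<^sup>2"
  proof -
    have "ennreal (integral\<^sup>L D \<phi>) = (\<integral>\<^sup>+ x. ennreal (\<phi> x) \<partial>D)"
      by (rule nn_integral_eq_integral[symmetric, OF i\<phi>]) (simp add: \<phi>_def)
    also have "\<dots> \<le> ennreal (\<sigma>\<^sup>2)" using var by (simp add: \<phi>_def)
    finally show ?thesis by (simp add: ennreal_le_iff)
  qed
  have pw: "(norm (G e))\<^sup>2 = (norm m)\<^sup>2 + 2 * inner m (G e - m) + \<phi> e" for e
    by (simp add: \<phi>_def power2_norm_eq_inner inner_diff_left inner_diff_right inner_commute algebra_simps)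
  have iI: "integrable D (\<lambda>e. inner m (G e - m))"
    using iG by (intro integrable_inner_right integrable_diff) auto
  have II: "(\<integral>e. inner m (G e - m) \<partial>D) = 0"
    using iG IG by (simp add: integral_inner_right integral_diff prob_space)
  have iN: "integrable D (\<lambda>e. (norm m)\<^sup>2 + 2 * inner m (G e - m) + \<phi> e)"
    using iI i\<phi> by auto
  have IN: "(\<integral>e. (norm m)\<^sup>2 + 2 * inner m (G e - m) + \<phi> e \<partial>D) = (norm m)\<^sup>2 + integral\<^sup>L D \<phi>"
    using iI i\<phi> II by (simp add: prob_space)
  have "(\<integral>\<^sup>+ e. ennreal ((norm (G e))\<^sup>2) \<partial>D) = (\<integral>\<^sup>+ e. ennreal ((norm m)\<^sup>2 + 2 * inner m (G e - m) + \<phi> e) \<partial>D)"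
    by (simp add: pw)
  also have "\<dots> = ennreal ((norm m)\<^sup>2 + integral\<^sup>L D \<phi>)"
    unfolding IN[symmetric]
    by (rule nn_integral_eq_integral[OF iN]) (simp add: pw[symmetric])
  also have "\<dots> \<le> ennreal ((norm m)\<^sup>2 + \<sigma>\<^sup>2)"
    using I\<phi> by (intro ennreal_leI) simp
  finally show ?thesis .
qed

lemma oracle_bound:
  fixes g :: "nat \<Rightarrow> 'a::euclidean_space \<Rightarrow> 'x \<Rightarrow> 'a"
  assumes D: "prob_space D" and Q: "prob_space Q"
    and gm: "(\<lambda>(y, e). g i y e) \<in> borel_measurable (borel \<Otimes>\<^sub>M D)"
    and ub: "has_bochner_integral D (\<lambda>e. g i y e) m"
    and var: "(\<integral>\<^sup>+ e. ennreal ((norm (g i y e - m))\<^sup>2) \<partial>D) \<le> ennreal (\<sigma>\<^sup>2)"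
    and CR_meas: "(\<lambda>(u, x). rep_compress C R u x) \<in> borel_measurable (Q \<Otimes>\<^sub>M borel)"
    and CR_contr: "\<And>x. (\<integral>\<^sup>+ u. ennreal ((norm (rep_compress C R u x - x))\<^sup>2) \<partial>Q)
                       \<le> ennreal ((1 - \<delta>) ^ R * (norm x)\<^sup>2)"
    and dl: "\<delta> \<le> 1"
  shows "(\<integral>\<^sup>+ z. ennreal ((norm (g i y (fst z) - rep_compress C R (snd z) (g i y (fst z))))\<^sup>2) \<partial>(D \<Otimes>\<^sub>M Q))
     \<le> ennreal ((1 - \<delta>) ^ R) * ennreal ((norm m)\<^sup>2 + \<sigma>\<^sup>2)"
proof -
  interpret Q: prob_space Q by (rule Q)
  have gy: "(\<lambda>e. g i y e) \<in> borel_measurable D"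
    using measurable_compose[OF measurable_Pair[OF measurable_const[of y] measurable_ident_sets[OF refl]] gm]
    by simp
  have gz: "(\<lambda>z. g i y (fst z)) \<in> borel_measurable (D \<Otimes>\<^sub>M Q)"
    by (rule measurable_compose[OF measurable_fst gy])
  have cz: "(\<lambda>z. rep_compress C R (snd z) (g i y (fst z))) \<in> borel_measurable (D \<Otimes>\<^sub>M Q)"
    using measurable_compose[OF measurable_Pair[OF measurable_snd gz] CR_meas] by simp
  have hm: "(\<lambda>z. ennreal ((norm (g i y (fst z) - rep_compress C R (snd z) (g i y (fst z))))\<^sup>2)) \<in> borel_measurable (D \<Otimes>\<^sub>M Q)"
    using gz cz by measurable
  have "(\<integral>\<^sup>+ z. ennreal ((norm (g i y (fst z) - rep_compress C R (snd z) (g i y (fst z))))\<^sup>2) \<partial>(D \<Otimes>\<^sub>M Q))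
      = (\<integral>\<^sup>+ e. \<integral>\<^sup>+ u. ennreal ((norm (g i y e - rep_compress C R u (g i y e)))\<^sup>2) \<partial>Q \<partial>D)"
    using Q.nn_integral_fst[OF hm] by simp
  also have "\<dots> \<le> (\<integral>\<^sup>+ e. ennreal ((1 - \<delta>) ^ R * (norm (g i y e))\<^sup>2) \<partial>D)"
    by (intro nn_integral_mono) (use CR_contr in \<open>simp add: norm_minus_commute\<close>)
  also have "\<dots> = (\<integral>\<^sup>+ e. ennreal ((1 - \<delta>) ^ R) * ennreal ((norm (g i y e))\<^sup>2) \<partial>D)"
    using dl by (simp add: ennreal_mult)
  also have "\<dots> = ennreal ((1 - \<delta>) ^ R) * (\<integral>\<^sup>+ e. ennreal ((norm (g i y e))\<^sup>2) \<partial>D)"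
    using gy by (intro nn_integral_cmult) measurable
  also have "\<dots> \<le> ennreal ((1 - \<delta>) ^ R) * ennreal ((norm m)\<^sup>2 + \<sigma>\<^sup>2)"
    by (intro mult_left_mono second_moment[OF D ub var]) simp
  finally show ?thesis .
qed

lemma indep_step:
  fixes g :: "nat \<Rightarrow> 'a::euclidean_space \<Rightarrow> 'x \<Rightarrow> 'a" and D :: "nat \<Rightarrow> 'x measure"
    and C :: "'c \<Rightarrow> 'a \<Rightarrow> 'a" and Q :: "(nat \<Rightarrow> 'c) measure"
    and M :: "'m measure"
    and \<xi> :: "nat \<Rightarrow> nat \<Rightarrow> 'm \<Rightarrow> 'x" and s :: "nat \<Rightarrow> nat \<Rightarrow> 'm \<Rightarrow> nat \<Rightarrow> 'c"
  assumes M_prob: "prob_space M" and Q_prob: "prob_space Q"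
    and D_prob: "\<And>i. i < n \<Longrightarrow> prob_space (D i)"
    and g_meas: "\<And>i. i < n \<Longrightarrow> (\<lambda>(y, e). g i y e) \<in> borel_measurable (borel \<Otimes>\<^sub>M D i)"
    and CR_meas: "(\<lambda>(u, x). rep_compress C R u x) \<in> borel_measurable (Q \<Otimes>\<^sub>M borel)"
    and indep: "prob_space.indep_vars M (\<lambda>(i, t). D i \<Otimes>\<^sub>M Q) (\<lambda>(i, t) \<omega>. (\<xi> i t \<omega>, s i t \<omega>))
                  ({..<n} \<times> UNIV)"
    and laws: "\<And>i t. i < n \<Longrightarrow> distr M (D i \<Otimes>\<^sub>M Q) (\<lambda>\<omega>. (\<xi> i t \<omega>, s i t \<omega>)) = D i \<Otimes>\<^sub>M Q"
    and i: "i < n"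
  shows "(\<lambda>\<omega>. ennreal ((norm (neo_g n g C R a A0 x0 v0 (\<lambda>i t. \<xi> i t \<omega>) (\<lambda>i t. s i t \<omega>) i j
              - neo_ghat n g C R a A0 x0 v0 (\<lambda>i t. \<xi> i t \<omega>) (\<lambda>i t. s i t \<omega>) i j))\<^sup>2)) \<in> borel_measurable M"
    and "(\<integral>\<^sup>+ \<omega>. ennreal ((norm (neo_g n g C R a A0 x0 v0 (\<lambda>i t. \<xi> i t \<omega>) (\<lambda>i t. s i t \<omega>) i j
              - neo_ghat n g C R a A0 x0 v0 (\<lambda>i t. \<xi> i t \<omega>) (\<lambda>i t. s i t \<omega>) i j))\<^sup>2) \<partial>M)
       = (\<integral>\<^sup>+ \<omega>. (\<integral>\<^sup>+ z. ennreal ((norm (g i (neo_y n g C R a A0 x0 v0 (\<lambda>i t. \<xi> i t \<omega>) (\<lambda>i t. s i t \<omega>) j) (fst z) - rep_compress C R (snd z) (g i (neo_y n g C R a A0 x0 v0 (\<lambda>i t. \<xi> i t \<omega>) (\<lambda>i t. s i t \<omega>) j) (fst z))))\<^sup>2) \<partial>(D i \<Otimes>\<^sub>M Q)) \<partial>M)"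
    and "(\<lambda>y. (\<integral>\<^sup>+ z. ennreal ((norm (g i y (fst z) - rep_compress C R (snd z) (g i y (fst z))))\<^sup>2) \<partial>(D i \<Otimes>\<^sub>M Q)))
          \<in> borel_measurable borel"
proof -
  interpret prob_space M by (rule M_prob)
  interpret DQ: prob_space "D i \<Otimes>\<^sub>M Q"
    using D_prob[OF i] Q_prob by (intro prob_space_pair) (auto intro: prob_space_imp_sigma_finite)
  define M' where "M' = (\<lambda>(i::nat, t::nat). D i \<Otimes>\<^sub>M Q)"
  define X where "X = (\<lambda>(i::nat, t::nat) \<omega>. (\<xi> i t \<omega>, s i t \<omega>))"
  have ind: "indep_vars M' X ({..<n} \<times> UNIV)" using indep unfolding M'_def X_def .
  have rv: "\<And>i' t. i' < n \<Longrightarrow> (\<lambda>\<omega>. (\<xi> i' t \<omega>, s i' t \<omega>)) \<in> measurable M (D i' \<Otimes>\<^sub>M Q)"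
  proof -
    fix i' t assume "i' < n"
    then have "X (i', t) \<in> measurable M (M' (i', t))" using ind unfolding indep_vars_def by auto
    then show "(\<lambda>\<omega>. (\<xi> i' t \<omega>, s i' t \<omega>)) \<in> measurable M (D i' \<Otimes>\<^sub>M Q)" by (simp add: X_def M'_def)
  qed
  define Y where "Y \<omega> = neo_y n g C R a A0 x0 v0 (\<lambda>i t. \<xi> i t \<omega>) (\<lambda>i t. s i t \<omega>) j" for \<omega>
  define Z where "Z \<omega> = (\<xi> i j \<omega>, s i j \<omega>)" for \<omega>
  define h where "h p = ennreal ((norm (g i (fst p) (fst (snd p)) - rep_compress C R (snd (snd p)) (g i (fst p) (fst (snd p)))))\<^sup>2)" for p
  have mY: "Y \<in> borel_measurable M" unfolding Y_def
    by (rule neo_y_meas[OF g_meas CR_meas]) (use rv in auto)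
  have mZ: "Z \<in> measurable M (D i \<Otimes>\<^sub>M Q)" unfolding Z_def by (rule rv[OF i])
  have mh: "h \<in> borel_measurable (borel \<Otimes>\<^sub>M (D i \<Otimes>\<^sub>M Q))"
  proof -
    have a1: "(\<lambda>p. (fst p, fst (snd p))) \<in> measurable (borel \<Otimes>\<^sub>M (D i \<Otimes>\<^sub>M Q)) (borel \<Otimes>\<^sub>M D i)"
      by measurable
    have gg: "(\<lambda>p. g i (fst p) (fst (snd p))) \<in> borel_measurable (borel \<Otimes>\<^sub>M (D i \<Otimes>\<^sub>M Q))"
      using measurable_compose[OF a1 g_meas[OF i]] by (simp add: split_beta)
    have a2: "(\<lambda>p. (snd (snd p), g i (fst p) (fst (snd p)))) \<in> measurable (borel \<Otimes>\<^sub>M (D i \<Otimes>\<^sub>M Q)) (Q \<Otimes>\<^sub>M borel)"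
      using gg by measurable
    have cc: "(\<lambda>p. rep_compress C R (snd (snd p)) (g i (fst p) (fst (snd p)))) \<in> borel_measurable (borel \<Otimes>\<^sub>M (D i \<Otimes>\<^sub>M Q))"
      using measurable_compose[OF a2 CR_meas] by (simp add: split_beta)
    show ?thesis unfolding h_def using gg cc by measurable
  qed
  have integrand: "ennreal ((norm (neo_g n g C R a A0 x0 v0 (\<lambda>i t. \<xi> i t \<omega>) (\<lambda>i t. s i t \<omega>) i j
              - neo_ghat n g C R a A0 x0 v0 (\<lambda>i t. \<xi> i t \<omega>) (\<lambda>i t. s i t \<omega>) i j))\<^sup>2) = h (Y \<omega>, Z \<omega>)" for \<omega>
    by (simp add: h_def Y_def Z_def neo_g_def neo_ghat_def)
  have mYZ: "(\<lambda>\<omega>. (Y \<omega>, Z \<omega>)) \<in> measurable M (borel \<Otimes>\<^sub>M (D i \<Otimes>\<^sub>M Q))"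
    using mY mZ by measurable
  show "(\<lambda>\<omega>. ennreal ((norm (neo_g n g C R a A0 x0 v0 (\<lambda>i t. \<xi> i t \<omega>) (\<lambda>i t. s i t \<omega>) i j
              - neo_ghat n g C R a A0 x0 v0 (\<lambda>i t. \<xi> i t \<omega>) (\<lambda>i t. s i t \<omega>) i j))\<^sup>2)) \<in> borel_measurable M"
    unfolding integrand using measurable_compose[OF mYZ mh] by simp
  define K where "K = {..<n} \<times> {..<j}"
  define L where "L = {(i, j)}"
  have indKL: "indep_var (PiM K M') (\<lambda>\<omega>. restrict (\<lambda>k. X k \<omega>) K) (PiM L M') (\<lambda>\<omega>. restrict (\<lambda>k. X k \<omega>) L)"
    by (rule indep_var_restrict[OF ind]) (auto simp: K_def L_def i)
  define Yf where "Yf \<omega>' = neo_y n g C R a A0 x0 v0 (\<lambda>i t. fst (\<omega>' (i, t))) (\<lambda>i t. snd (\<omega>' (i, t))) j" for \<omega>'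
  define Zf where "Zf \<omega>' = (\<omega>' (i, j) :: 'x \<times> (nat \<Rightarrow> 'c))" for \<omega>'
  have mYf: "Yf \<in> borel_measurable (PiM K M')" unfolding Yf_def
  proof (rule neo_y_meas[OF g_meas CR_meas])
    fix i' t' assume "i' < n" "t' < j"
    then have "(i', t') \<in> K" by (simp add: K_def)
    then have "(\<lambda>\<omega>'. \<omega>' (i', t')) \<in> measurable (PiM K M') (M' (i', t'))"
      by (rule measurable_component_singleton)
    then show "(\<lambda>\<omega>'. (fst (\<omega>' (i', t')), snd (\<omega>' (i', t')))) \<in> measurable (PiM K M') (D i' \<Otimes>\<^sub>M Q)"
      by (simp add: M'_def)
  qed
  have mZf: "Zf \<in> measurable (PiM L M') (D i \<Otimes>\<^sub>M Q)"
  proof -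
    have "(\<lambda>\<omega>'. \<omega>' (i, j)) \<in> measurable (PiM L M') (M' (i, j))"
      by (rule measurable_component_singleton) (simp add: L_def)
    then show ?thesis by (simp add: M'_def Zf_def[abs_def])
  qed
  define RK where "RK \<omega> = restrict (\<lambda>k. X k \<omega>) K" for \<omega>
  define RL where "RL \<omega> = restrict (\<lambda>k. X k \<omega>) L" for \<omega>
  have mRK: "RK \<in> measurable M (PiM K M')" using indKL unfolding RK_def[abs_def] by (auto dest: indep_var_rv1)
  have mRL: "RL \<in> measurable M (PiM L M')" using indKL unfolding RL_def[abs_def] by (auto dest: indep_var_rv2)
  have eY: "Yf (RK \<omega>) = Y \<omega>" for \<omega>
    unfolding Yf_def Y_def RK_def
    by (rule neo_y_cong) (simp add: K_def X_def)
  have eZ: "Zf (RL \<omega>) = Z \<omega>" for \<omega>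
    by (auto simp: Zf_def Z_def L_def X_def RL_def)
  have dist: "distr M (PiM K M') RK \<Otimes>\<^sub>M distr M (PiM L M') RL = distr M (PiM K M' \<Otimes>\<^sub>M PiM L M') (\<lambda>\<omega>. (RK \<omega>, RL \<omega>))"
    using indKL unfolding indep_var_distribution_eq RK_def[abs_def] RL_def[abs_def] by simp
  interpret PL: prob_space "distr M (PiM L M') RL" by (rule prob_space_distr[OF mRL])
  define hh where "hh p = h (Yf (fst p), Zf (snd p))" for p
  have mhh: "hh \<in> borel_measurable (PiM K M' \<Otimes>\<^sub>M PiM L M')"
  proof -
    have "(\<lambda>p. (Yf (fst p), Zf (snd p))) \<in> measurable (PiM K M' \<Otimes>\<^sub>M PiM L M') (borel \<Otimes>\<^sub>M (D i \<Otimes>\<^sub>M Q))"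
      using mYf mZf by measurable
    from measurable_compose[OF this mh] show ?thesis unfolding hh_def by simp
  qed
  have mhh': "hh \<in> borel_measurable (distr M (PiM K M') RK \<Otimes>\<^sub>M distr M (PiM L M') RL)"
    using mhh by (simp cong: measurable_cong_sets)
  have mRKL: "(\<lambda>\<omega>. (RK \<omega>, RL \<omega>)) \<in> measurable M (PiM K M' \<Otimes>\<^sub>M PiM L M')"
    using mRK mRL by measurable
  define F where "F y = (\<integral>\<^sup>+ z. h (y, z) \<partial>(D i \<Otimes>\<^sub>M Q))" for y
  have mF: "F \<in> borel_measurable borel"
    unfolding F_def using DQ.borel_measurable_nn_integral_fst[OF mh] by simp
  have inner: "(\<integral>\<^sup>+ v. hh (u, v) \<partial>distr M (PiM L M') RL) = F (Yf u)" if u: "u \<in> space (PiM K M')" for u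
  proof -
    have yu: "Yf u \<in> space borel" by simp
    have m1: "(\<lambda>z. h (Yf u, z)) \<in> borel_measurable (D i \<Otimes>\<^sub>M Q)"
      using measurable_compose_Pair1[OF yu mh] .
    have m2: "(\<lambda>v. hh (u, v)) \<in> borel_measurable (PiM L M')"
      unfolding hh_def using measurable_compose[OF mZf m1] by simp
    have "(\<integral>\<^sup>+ v. hh (u, v) \<partial>distr M (PiM L M') RL) = (\<integral>\<^sup>+ \<omega>. hh (u, RL \<omega>) \<partial>M)"
      by (rule nn_integral_distr[OF mRL]) (use m2 in simp)
    also have "\<dots> = (\<integral>\<^sup>+ \<omega>. h (Yf u, Z \<omega>) \<partial>M)" by (simp add: hh_def eZ)
    also have "\<dots> = (\<integral>\<^sup>+ z. h (Yf u, z) \<partial>distr M (D i \<Otimes>\<^sub>M Q) Z)"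
      by (rule nn_integral_distr[OF mZ, symmetric]) (use m1 in simp)
    also have "\<dots> = F (Yf u)" unfolding Z_def laws[OF i] F_def ..
    finally show ?thesis .
  qed
  have "(\<integral>\<^sup>+ \<omega>. h (Y \<omega>, Z \<omega>) \<partial>M) = (\<integral>\<^sup>+ \<omega>. hh (RK \<omega>, RL \<omega>) \<partial>M)"
    by (simp add: hh_def eY eZ)
  also have "\<dots> = integral\<^sup>N (distr M (PiM K M' \<Otimes>\<^sub>M PiM L M') (\<lambda>\<omega>. (RK \<omega>, RL \<omega>))) hh"
    by (rule nn_integral_distr[OF mRKL, symmetric]) (use mhh in simp)
  also have "\<dots> = integral\<^sup>N (distr M (PiM K M') RK \<Otimes>\<^sub>M distr M (PiM L M') RL) hh" unfolding dist ..
  also have "\<dots> = (\<integral>\<^sup>+ u. \<integral>\<^sup>+ v. hh (u, v) \<partial>distr M (PiM L M') RL \<partial>distr M (PiM K M') RK)"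
    by (rule PL.nn_integral_fst[OF mhh', symmetric])
  also have "\<dots> = (\<integral>\<^sup>+ u. F (Yf u) \<partial>distr M (PiM K M') RK)"
    by (rule nn_integral_cong) (simp add: inner)
  also have "\<dots> = (\<integral>\<^sup>+ \<omega>. F (Yf (RK \<omega>)) \<partial>M)"
    by (rule nn_integral_distr[OF mRK]) (use measurable_compose[OF mYf mF] in simp)
  also have "\<dots> = (\<integral>\<^sup>+ \<omega>. F (Y \<omega>) \<partial>M)" by (simp add: eY)
  finally show "(\<integral>\<^sup>+ \<omega>. ennreal ((norm (neo_g n g C R a A0 x0 v0 (\<lambda>i t. \<xi> i t \<omega>) (\<lambda>i t. s i t \<omega>) i j
              - neo_ghat n g C R a A0 x0 v0 (\<lambda>i t. \<xi> i t \<omega>) (\<lambda>i t. s i t \<omega>) i j))\<^sup>2) \<partial>M)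
       = (\<integral>\<^sup>+ \<omega>. (\<integral>\<^sup>+ z. ennreal ((norm (g i (neo_y n g C R a A0 x0 v0 (\<lambda>i t. \<xi> i t \<omega>) (\<lambda>i t. s i t \<omega>) j) (fst z) - rep_compress C R (snd z) (g i (neo_y n g C R a A0 x0 v0 (\<lambda>i t. \<xi> i t \<omega>) (\<lambda>i t. s i t \<omega>) j) (fst z))))\<^sup>2) \<partial>(D i \<Otimes>\<^sub>M Q)) \<partial>M)"
    unfolding integrand by (simp add: h_def Y_def F_def)
  show "(\<lambda>y. (\<integral>\<^sup>+ z. ennreal ((norm (g i y (fst z) - rep_compress C R (snd z) (g i y (fst z))))\<^sup>2) \<partial>(D i \<Otimes>\<^sub>M Q)))
          \<in> borel_measurable borel"
    using DQ.borel_measurable_nn_integral_fst[OF mh] by (simp add: h_def)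
qed

lemma pw_bound:
  fixes G H :: "nat \<Rightarrow> nat \<Rightarrow> 'a::real_normed_vector"
  assumes n: "n > 0"
  shows "(norm (\<Sum>j<t. a (Suc j) *\<^sub>R ((1 / real n) *\<^sub>R (\<Sum>i<n. G i j) - (1 / real n) *\<^sub>R (\<Sum>i<n. H i j))))\<^sup>2
    \<le> (\<Sum>j<t. \<Sum>i<n. (real t * (a (Suc j))\<^sup>2 / real n) * (norm (G i j - H i j))\<^sup>2)"
proof -
  have e: "(1 / real n) *\<^sub>R (\<Sum>i<n. G i j) - (1 / real n) *\<^sub>R (\<Sum>i<n. H i j) = (1 / real n) *\<^sub>R (\<Sum>i<n. G i j - H i j)" for j
    by (simp add: sum_subtractf scaleR_diff_right)
  have b: "(norm ((1 / real n) *\<^sub>R (\<Sum>i<n. G i j - H i j)))\<^sup>2 \<le> (1 / real n) * (\<Sum>i<n. (norm (G i j - H i j))\<^sup>2)" for j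
  proof -
    have "(norm ((1 / real n) *\<^sub>R (\<Sum>i<n. G i j - H i j)))\<^sup>2 = (1 / real n)\<^sup>2 * (norm (\<Sum>i<n. G i j - H i j))\<^sup>2"
      by (simp add: power_divide)
    also have "\<dots> \<le> (1 / real n)\<^sup>2 * (real n * (\<Sum>i<n. (norm (G i j - H i j))\<^sup>2))"
      using norm_sum_sq[of "\<lambda>i. G i j - H i j" "{..<n}"] by (intro mult_left_mono) auto
    also have "\<dots> = (1 / real n) * (\<Sum>i<n. (norm (G i j - H i j))\<^sup>2)"
      using n by (simp add: power2_eq_square)
    finally show ?thesis .
  qed
  have "(norm (\<Sum>j<t. a (Suc j) *\<^sub>R ((1 / real n) *\<^sub>R (\<Sum>i<n. G i j) - (1 / real n) *\<^sub>R (\<Sum>i<n. H i j))))\<^sup>2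
      \<le> real t * (\<Sum>j<t. (norm (a (Suc j) *\<^sub>R ((1 / real n) *\<^sub>R (\<Sum>i<n. G i j - H i j))))\<^sup>2)"
    unfolding e by (rule norm_sum_sq[of _ "{..<t}", simplified])
  also have "\<dots> \<le> real t * (\<Sum>j<t. (a (Suc j))\<^sup>2 * ((1 / real n) * (\<Sum>i<n. (norm (G i j - H i j))\<^sup>2)))"
  proof (intro mult_left_mono sum_mono)
    fix j
    have "(norm (a (Suc j) *\<^sub>R ((1 / real n) *\<^sub>R (\<Sum>i<n. G i j - H i j))))\<^sup>2
        = (a (Suc j))\<^sup>2 * (norm ((1 / real n) *\<^sub>R (\<Sum>i<n. G i j - H i j)))\<^sup>2"
      by (simp only: norm_scaleR power_mult_distrib power2_abs)
    also have "\<dots> \<le> (a (Suc j))\<^sup>2 * ((1 / real n) * (\<Sum>i<n. (norm (G i j - H i j))\<^sup>2))"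
      by (intro mult_left_mono b) simp
    finally show "(norm (a (Suc j) *\<^sub>R ((1 / real n) *\<^sub>R (\<Sum>i<n. G i j - H i j))))\<^sup>2
        \<le> (a (Suc j))\<^sup>2 * ((1 / real n) * (\<Sum>i<n. (norm (G i j - H i j))\<^sup>2))" .
  qed simp
  also have "\<dots> = (\<Sum>j<t. \<Sum>i<n. (real t * (a (Suc j))\<^sup>2 / real n) * (norm (G i j - H i j))\<^sup>2)"
    by (simp add: sum_distrib_left mult_ac)
  finally show ?thesis .
qed

theorem mainTheorem1:
  fixes n :: nat
    and fi :: "nat \<Rightarrow> 'a::euclidean_space \<Rightarrow> real" and gfi :: "nat \<Rightarrow> 'a \<Rightarrow> 'a"
    and f :: "'a \<Rightarrow> real" and gf :: "'a \<Rightarrow> 'a"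
    and L \<sigma> \<zeta> \<delta> :: real and R :: nat and xstar :: 'a
    and g :: "nat \<Rightarrow> 'a \<Rightarrow> 'x \<Rightarrow> 'a" and D :: "nat \<Rightarrow> 'x measure"
    and C :: "'c \<Rightarrow> 'a \<Rightarrow> 'a" and Q :: "(nat \<Rightarrow> 'c) measure"
    and M :: "'m measure"
    and \<xi> :: "nat \<Rightarrow> nat \<Rightarrow> 'm \<Rightarrow> 'x" and s :: "nat \<Rightarrow> nat \<Rightarrow> 'm \<Rightarrow> nat \<Rightarrow> 'c"
    and a :: "nat \<Rightarrow> real" and A0 :: real and x0 v0 :: 'a
    and w :: "nat \<Rightarrow> real" and T :: nat
  assumes n_pos: "n > 0"
    (* f = (1/n) sum f_i, with gradients *)
    and grad_fi: "\<And>i x. i < n \<Longrightarrow> (fi i has_derivative (\<lambda>h. inner (gfi i x) h)) (at x)"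
    and f_def: "f = (\<lambda>x. (\<Sum>i<n. fi i x) / real n)"
    and gf_def: "gf = (\<lambda>x. (1 / real n) *\<^sub>R (\<Sum>i<n. gfi i x))"
    (* convex, L-smooth, minimizer *)
    and f_convex: "convex_on UNIV f"
    and f_smooth: "\<And>x y. norm (gf x - gf y) \<le> L * norm (x - y)"
    and xstar_min: "\<And>x. f xstar \<le> f x"
    (* gradient similarity *)
    and similarity: "\<And>x. (\<Sum>i<n. (norm (gfi i x - gf x))\<^sup>2) / real n \<le> \<zeta>\<^sup>2"
    (* stochastic oracles: unbiased, variance at most sigma^2 *)
    and D_prob: "\<And>i. i < n \<Longrightarrow> prob_space (D i)"
    and g_meas: "\<And>i. i < n \<Longrightarrow> (\<lambda>(y, e). g i y e) \<in> borel_measurable (borel \<Otimes>\<^sub>M D i)"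
    and unbiased: "\<And>i x. i < n \<Longrightarrow> has_bochner_integral (D i) (\<lambda>e. g i x e) (gfi i x)"
    and variance: "\<And>i x. i < n \<Longrightarrow>
        (\<integral>\<^sup>+ e. ennreal ((norm (g i x e - gfi i x))\<^sup>2) \<partial>D i) \<le> ennreal (\<sigma>\<^sup>2)"
    (* repeated compressor C_R with randomness law Q *)
    and delta: "0 < \<delta>" "\<delta> \<le> 1" and R_pos: "R \<ge> 1"
    and Q_prob: "prob_space Q"
    and CR_meas: "(\<lambda>(u, x). rep_compress C R u x) \<in> borel_measurable (Q \<Otimes>\<^sub>M borel)"
    and CR_contr: "\<And>x. (\<integral>\<^sup>+ u. ennreal ((norm (rep_compress C R u x - x))\<^sup>2) \<partial>Q)
                       \<le> ennreal ((1 - \<delta>) ^ R * (norm x)\<^sup>2)"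
    (* randomness: all samples and compressor randomness are independent *)
    and M_prob: "prob_space M"
    and indep: "prob_space.indep_vars M (\<lambda>(i, t). D i \<Otimes>\<^sub>M Q) (\<lambda>(i, t) \<omega>. (\<xi> i t \<omega>, s i t \<omega>))
                  ({..<n} \<times> UNIV)"
    and laws: "\<And>i t. i < n \<Longrightarrow> distr M (D i \<Otimes>\<^sub>M Q) (\<lambda>\<omega>. (\<xi> i t \<omega>, s i t \<omega>)) = D i \<Otimes>\<^sub>M Q"
    (* NEOLITHIC parameters *)
    and A0_nonneg: "A0 \<ge> 0"
    and a_pos: "\<And>t. t \<ge> 1 \<Longrightarrow> a t > 0"
    and T_pos: "T \<ge> 1"
    and w_nonneg: "\<And>t. 1 \<le> t \<Longrightarrow> t \<le> T \<Longrightarrow> w t \<ge> 0"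
  shows
   "(\<Sum>t<T. ennreal (w (Suc t)) *
       (\<integral>\<^sup>+ \<omega>. ennreal ((norm (\<Sum>j<t. a (Suc j) *\<^sub>R
            ((1 / real n) *\<^sub>R (\<Sum>i<n. neo_g n g C R a A0 x0 v0 (\<lambda>i t. \<xi> i t \<omega>) (\<lambda>i t. s i t \<omega>) i j)
             - (1 / real n) *\<^sub>R (\<Sum>i<n. neo_ghat n g C R a A0 x0 v0 (\<lambda>i t. \<xi> i t \<omega>) (\<lambda>i t. s i t \<omega>) i j))))\<^sup>2) \<partial>M))
    \<le> ennreal ((1 - \<delta>) ^ R * \<zeta>\<^sup>2 * (\<Sum>t<T. w (Suc t) * real t * (\<Sum>j<t. (a (Suc j))\<^sup>2)))
      + ennreal (2 * L * (1 - \<delta>) ^ R) *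
         (\<Sum>t<T. ennreal (w (Suc t) * real t) *
            (\<Sum>j<t. ennreal ((a (Suc j))\<^sup>2) *
               (\<integral>\<^sup>+ \<omega>. ennreal (bregman f gf
                   (neo_y n g C R a A0 x0 v0 (\<lambda>i t. \<xi> i t \<omega>) (\<lambda>i t. s i t \<omega>) j) xstar) \<partial>M)))
      + ennreal ((1 - \<delta>) ^ R * \<sigma>\<^sup>2 * (\<Sum>t<T. w (Suc t) * real t * (\<Sum>j<t. (a (Suc j))\<^sup>2)))"
proof -
  interpret prob_space M by (rule M_prob)
  have n0: "real n > 0" using n_pos by simp
  have der_f: "(f has_derivative (\<lambda>h. inner (gf x) h)) (at x)" for x
  proof -
    have d: "((\<lambda>x. (\<Sum>i<n. fi i x) / real n) has_derivative (\<lambda>h. (\<Sum>i<n. inner (gfi i x) h) / real n)) (at x)"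
      using grad_fi n_pos by (auto intro!: derivative_eq_intros)
    have e: "(\<lambda>h. (\<Sum>i<n. inner (gfi i x) h) / real n) = (\<lambda>h. inner (gf x) h)"
      by (auto simp: gf_def inner_sum_left fun_eq_iff)
    show ?thesis using d unfolding e f_def .
  qed
  note gfs = grad_facts[OF der_f f_smooth xstar_min]
  have L0: "0 \<le> L" and gx0: "gf xstar = 0" using gfs by auto
  have breg: "bregman f gf y xstar = f y - f xstar" for y by (simp add: bregman_def gx0)
  have breg_nn: "0 \<le> bregman f gf y xstar" for y using xstar_min[of y] breg[of y] by simp
  have sumg: "(\<Sum>i<n. (norm (gfi i y))\<^sup>2) \<le> real n * (\<zeta>\<^sup>2 + 2 * L * bregman f gf y xstar)" for y
  proof -
    have gfy: "(1 / real n) *\<^sub>R (\<Sum>i<n. gfi i y) = gf y" by (simp add: gf_def)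
    have s1: "(\<Sum>i<n. (norm (gfi i y - gf y))\<^sup>2) \<le> real n * \<zeta>\<^sup>2"
      using similarity[of y] n0 by (simp add: field_simps)
    have s2: "(\<Sum>i<n. (norm (gfi i y - gf y))\<^sup>2) = (\<Sum>i<n. (norm (gfi i y))\<^sup>2) - real n * (norm (gf y))\<^sup>2"
      using sum_sq_dev[OF n_pos, of "\<lambda>i. gfi i y"] unfolding gfy .
    have s3: "(norm (gf y))\<^sup>2 \<le> 2 * L * bregman f gf y xstar" using gfs(3)[of y] breg[of y] by simp
    have "real n * (norm (gf y))\<^sup>2 \<le> real n * (2 * L * bregman f gf y xstar)"
      using s3 by (intro mult_left_mono) auto
    then show ?thesis using s1 s2 by (simp add: algebra_simps)
  qed
  define c where "c = (1 - \<delta>) ^ R"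
  have c0: "0 \<le> c" using delta by (simp add: c_def)
  define Y where "Y = (\<lambda>j \<omega>. neo_y n g C R a A0 x0 v0 (\<lambda>i t. \<xi> i t \<omega>) (\<lambda>i t. s i t \<omega>) j)"
  define E where "E = (\<lambda>i j \<omega>. ennreal ((norm (neo_g n g C R a A0 x0 v0 (\<lambda>i t. \<xi> i t \<omega>) (\<lambda>i t. s i t \<omega>) i j - neo_ghat n g C R a A0 x0 v0 (\<lambda>i t. \<xi> i t \<omega>) (\<lambda>i t. s i t \<omega>) i j))\<^sup>2))"
  define F where "F = (\<lambda>i y. (\<integral>\<^sup>+ z. ennreal ((norm (g i y (fst z) - rep_compress C R (snd z) (g i y (fst z))))\<^sup>2) \<partial>(D i \<Otimes>\<^sub>M Q)))"
  define B where "B = (\<lambda>j. (\<integral>\<^sup>+ \<omega>. ennreal (bregman f gf (Y j \<omega>) xstar) \<partial>M))"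
  note IS = indep_step[OF M_prob Q_prob D_prob g_meas CR_meas indep laws]
  have mE: "E i j \<in> borel_measurable M" if "i < n" for i j
    unfolding E_def by (rule IS(1)) (use that in auto)
  have EF: "integral\<^sup>N M (E i j) = (\<integral>\<^sup>+ \<omega>. F i (Y j \<omega>) \<partial>M)" if "i < n" for i j
    unfolding E_def F_def Y_def by (rule IS(2)) (use that in auto)
  have mF: "F i \<in> borel_measurable borel" if "i < n" for i
    unfolding F_def by (rule IS(3)) (use that in auto)
  have rv: "\<And>i' t. i' < n \<Longrightarrow> (\<lambda>\<omega>. (\<xi> i' t \<omega>, s i' t \<omega>)) \<in> measurable M (D i' \<Otimes>\<^sub>M Q)"
  proof -
    fix i' t assume "i' < n"
    then have "(\<lambda>(i, t) \<omega>. (\<xi> i t \<omega>, s i t \<omega>)) (i', t) \<in> measurable M ((\<lambda>(i, t). D i \<Otimes>\<^sub>M Q) (i', t))"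
      using indep unfolding indep_vars_def by blast
    then show "(\<lambda>\<omega>. (\<xi> i' t \<omega>, s i' t \<omega>)) \<in> measurable M (D i' \<Otimes>\<^sub>M Q)" by simp
  qed
  have mY: "Y j \<in> borel_measurable M" for j
    unfolding Y_def by (rule neo_y_meas[OF g_meas CR_meas]) (use rv in auto)
  have mFY: "(\<lambda>\<omega>. F i (Y j \<omega>)) \<in> borel_measurable M" if "i < n" for i j
    using measurable_compose[OF mY mF[OF that]] by simp
  have f_cont: "continuous_on UNIV f"
    using der_f by (intro continuous_at_imp_continuous_on ballI has_derivative_continuous) auto
  have mf: "f \<in> borel_measurable borel" by (rule borel_measurable_continuous_onI[OF f_cont])
  have mbr: "(\<lambda>y. bregman f gf y xstar) \<in> borel_measurable borel"
    unfolding bregman_def using mf by measurable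
  have mB: "(\<lambda>\<omega>. ennreal (bregman f gf (Y j \<omega>) xstar)) \<in> borel_measurable M" for j
    using measurable_compose[OF mY mbr] by measurable
  have Fsum: "(\<Sum>i<n. F i y) \<le> ennreal (c * real n * (\<zeta>\<^sup>2 + \<sigma>\<^sup>2)) + ennreal (2 * L * c * real n) * ennreal (bregman f gf y xstar)" for y
  proof -
    have "(\<Sum>i<n. F i y) \<le> (\<Sum>i<n. ennreal c * ennreal ((norm (gfi i y))\<^sup>2 + \<sigma>\<^sup>2))"
    proof (rule sum_mono)
      fix i assume "i \<in> {..<n}"
      then have i: "i < n" by simp
      show "F i y \<le> ennreal c * ennreal ((norm (gfi i y))\<^sup>2 + \<sigma>\<^sup>2)"
        unfolding F_def c_def
        by (rule oracle_bound[where g=g and i=i and y=y, OF D_prob[OF i] Q_prob g_meas[OF i] unbiased[OF i, of y] variance[OF i, of y] CR_meas CR_contr delta(2)])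
    qed
    also have "\<dots> = (\<Sum>i<n. ennreal (c * ((norm (gfi i y))\<^sup>2 + \<sigma>\<^sup>2)))"
      using c0 by (simp add: ennreal_mult)
    also have "\<dots> = ennreal (\<Sum>i<n. c * ((norm (gfi i y))\<^sup>2 + \<sigma>\<^sup>2))"
      using c0 by (intro sum_ennreal) simp
    also have "\<dots> = ennreal (c * ((\<Sum>i<n. (norm (gfi i y))\<^sup>2) + real n * \<sigma>\<^sup>2))"
      by (simp add: sum_distrib_left[symmetric] sum.distrib)
    also have "\<dots> \<le> ennreal (c * (real n * (\<zeta>\<^sup>2 + 2 * L * bregman f gf y xstar) + real n * \<sigma>\<^sup>2))"
      using sumg[of y] c0 by (intro ennreal_leI mult_left_mono) auto
    also have "\<dots> = ennreal (c * real n * (\<zeta>\<^sup>2 + \<sigma>\<^sup>2) + (2 * L * c * real n) * bregman f gf y xstar)"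
      by (simp add: algebra_simps)
    also have "\<dots> = ennreal (c * real n * (\<zeta>\<^sup>2 + \<sigma>\<^sup>2)) + ennreal (2 * L * c * real n) * ennreal (bregman f gf y xstar)"
      using c0 L0 breg_nn[of y] by (simp add: ennreal_mult ennreal_plus)
    finally show ?thesis .
  qed
  have trm: "(\<integral>\<^sup>+ \<omega>. ennreal ((norm (\<Sum>j<t. a (Suc j) *\<^sub>R
            ((1 / real n) *\<^sub>R (\<Sum>i<n. neo_g n g C R a A0 x0 v0 (\<lambda>i t. \<xi> i t \<omega>) (\<lambda>i t. s i t \<omega>) i j)
             - (1 / real n) *\<^sub>R (\<Sum>i<n. neo_ghat n g C R a A0 x0 v0 (\<lambda>i t. \<xi> i t \<omega>) (\<lambda>i t. s i t \<omega>) i j))))\<^sup>2) \<partial>M)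
     \<le> ennreal (c * \<zeta>\<^sup>2 * (real t * (\<Sum>j<t. (a (Suc j))\<^sup>2)))
       + ennreal (2 * L * c) * (ennreal (real t) * (\<Sum>j<t. ennreal ((a (Suc j))\<^sup>2) * B j))
       + ennreal (c * \<sigma>\<^sup>2 * (real t * (\<Sum>j<t. (a (Suc j))\<^sup>2)))" for t
  proof -
    define k where "k = (\<lambda>j. real t * (a (Suc j))\<^sup>2 / real n)"
    have k0: "0 \<le> k j" for j by (simp add: k_def)
    have "(\<integral>\<^sup>+ \<omega>. ennreal ((norm (\<Sum>j<t. a (Suc j) *\<^sub>R
            ((1 / real n) *\<^sub>R (\<Sum>i<n. neo_g n g C R a A0 x0 v0 (\<lambda>i t. \<xi> i t \<omega>) (\<lambda>i t. s i t \<omega>) i j)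
             - (1 / real n) *\<^sub>R (\<Sum>i<n. neo_ghat n g C R a A0 x0 v0 (\<lambda>i t. \<xi> i t \<omega>) (\<lambda>i t. s i t \<omega>) i j))))\<^sup>2) \<partial>M)
       \<le> (\<integral>\<^sup>+ \<omega>. (\<Sum>j<t. \<Sum>i<n. ennreal (k j) * E i j \<omega>) \<partial>M)"
    proof (rule nn_integral_mono)
      fix \<omega>
      let ?G = "\<lambda>i j. neo_g n g C R a A0 x0 v0 (\<lambda>i t. \<xi> i t \<omega>) (\<lambda>i t. s i t \<omega>) i j"
      let ?H = "\<lambda>i j. neo_ghat n g C R a A0 x0 v0 (\<lambda>i t. \<xi> i t \<omega>) (\<lambda>i t. s i t \<omega>) i j"
      have "ennreal ((norm (\<Sum>j<t. a (Suc j) *\<^sub>R ((1 / real n) *\<^sub>R (\<Sum>i<n. ?G i j) - (1 / real n) *\<^sub>R (\<Sum>i<n. ?H i j))))\<^sup>2)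
          \<le> ennreal (\<Sum>j<t. \<Sum>i<n. k j * (norm (?G i j - ?H i j))\<^sup>2)"
        unfolding k_def by (rule ennreal_leI) (rule pw_bound[OF n_pos])
      also have "\<dots> = (\<Sum>j<t. ennreal (\<Sum>i<n. k j * (norm (?G i j - ?H i j))\<^sup>2))"
        using k0 by (intro sum_ennreal[symmetric] sum_nonneg mult_nonneg_nonneg) auto
      also have "\<dots> = (\<Sum>j<t. \<Sum>i<n. ennreal (k j * (norm (?G i j - ?H i j))\<^sup>2))"
        using k0 by (intro sum.cong refl sum_ennreal[symmetric] mult_nonneg_nonneg) auto
      also have "\<dots> = (\<Sum>j<t. \<Sum>i<n. ennreal (k j) * E i j \<omega>)"
        using k0 by (intro sum.cong refl) (simp add: E_def ennreal_mult)
      finally show "ennreal ((norm (\<Sum>j<t. a (Suc j) *\<^sub>R ((1 / real n) *\<^sub>R (\<Sum>i<n. ?G i j) - (1 / real n) *\<^sub>R (\<Sum>i<n. ?H i j))))\<^sup>2)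
          \<le> (\<Sum>j<t. \<Sum>i<n. ennreal (k j) * E i j \<omega>)" .
    qed
    also have "\<dots> = (\<Sum>j<t. \<integral>\<^sup>+ \<omega>. (\<Sum>i<n. ennreal (k j) * E i j \<omega>) \<partial>M)"
      by (rule nn_integral_sum) (use mE in auto)
    also have "\<dots> = (\<Sum>j<t. \<Sum>i<n. ennreal (k j) * integral\<^sup>N M (E i j))"
    proof (intro sum.cong refl)
      fix j
      have "(\<integral>\<^sup>+ \<omega>. (\<Sum>i<n. ennreal (k j) * E i j \<omega>) \<partial>M) = (\<Sum>i<n. \<integral>\<^sup>+ \<omega>. ennreal (k j) * E i j \<omega> \<partial>M)"
        by (rule nn_integral_sum) (use mE in auto)
      also have "\<dots> = (\<Sum>i<n. ennreal (k j) * integral\<^sup>N M (E i j))"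
        by (intro sum.cong refl nn_integral_cmult) (use mE in auto)
      finally show "(\<integral>\<^sup>+ \<omega>. (\<Sum>i<n. ennreal (k j) * E i j \<omega>) \<partial>M) = (\<Sum>i<n. ennreal (k j) * integral\<^sup>N M (E i j))" .
    qed
    also have "\<dots> = (\<Sum>j<t. ennreal (k j) * (\<integral>\<^sup>+ \<omega>. (\<Sum>i<n. F i (Y j \<omega>)) \<partial>M))"
    proof (intro sum.cong refl)
      fix j
      have "(\<integral>\<^sup>+ \<omega>. (\<Sum>i<n. F i (Y j \<omega>)) \<partial>M) = (\<Sum>i<n. \<integral>\<^sup>+ \<omega>. F i (Y j \<omega>) \<partial>M)"
        by (rule nn_integral_sum) (use mFY in auto)
      then show "(\<Sum>i<n. ennreal (k j) * integral\<^sup>N M (E i j)) = ennreal (k j) * (\<integral>\<^sup>+ \<omega>. (\<Sum>i<n. F i (Y j \<omega>)) \<partial>M)"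
        by (simp add: EF sum_distrib_left)
    qed
    also have "\<dots> \<le> (\<Sum>j<t. ennreal (k j) * (\<integral>\<^sup>+ \<omega>. ennreal (c * real n * (\<zeta>\<^sup>2 + \<sigma>\<^sup>2)) + ennreal (2 * L * c * real n) * ennreal (bregman f gf (Y j \<omega>) xstar) \<partial>M))"
      by (intro sum_mono mult_left_mono nn_integral_mono Fsum) auto
    also have "\<dots> = (\<Sum>j<t. ennreal (k j) * (ennreal (c * real n * (\<zeta>\<^sup>2 + \<sigma>\<^sup>2)) + ennreal (2 * L * c * real n) * B j))"
    proof (intro sum.cong refl)
      fix j
      have "(\<integral>\<^sup>+ \<omega>. ennreal (c * real n * (\<zeta>\<^sup>2 + \<sigma>\<^sup>2)) + ennreal (2 * L * c * real n) * ennreal (bregman f gf (Y j \<omega>) xstar) \<partial>M)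
          = (\<integral>\<^sup>+ \<omega>. ennreal (c * real n * (\<zeta>\<^sup>2 + \<sigma>\<^sup>2)) \<partial>M) + (\<integral>\<^sup>+ \<omega>. ennreal (2 * L * c * real n) * ennreal (bregman f gf (Y j \<omega>) xstar) \<partial>M)"
        by (rule nn_integral_add) (use mB in auto)
      also have "\<dots> = ennreal (c * real n * (\<zeta>\<^sup>2 + \<sigma>\<^sup>2)) + ennreal (2 * L * c * real n) * B j"
        unfolding B_def by (simp add: nn_integral_cmult[OF mB] emeasure_space_1)
      finally show "ennreal (k j) * (\<integral>\<^sup>+ \<omega>. ennreal (c * real n * (\<zeta>\<^sup>2 + \<sigma>\<^sup>2)) + ennreal (2 * L * c * real n) * ennreal (bregman f gf (Y j \<omega>) xstar) \<partial>M)
          = ennreal (k j) * (ennreal (c * real n * (\<zeta>\<^sup>2 + \<sigma>\<^sup>2)) + ennreal (2 * L * c * real n) * B j)" by simp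
    qed
    also have "\<dots> = (\<Sum>j<t. ennreal (c * \<zeta>\<^sup>2 * (real t * (a (Suc j))\<^sup>2))
          + ennreal (2 * L * c) * (ennreal (real t) * (ennreal ((a (Suc j))\<^sup>2) * B j))
          + ennreal (c * \<sigma>\<^sup>2 * (real t * (a (Suc j))\<^sup>2)))"
    proof (intro sum.cong refl)
      fix j
      have e1: "ennreal (k j) * ennreal (c * real n * (\<zeta>\<^sup>2 + \<sigma>\<^sup>2)) = ennreal (c * \<zeta>\<^sup>2 * (real t * (a (Suc j))\<^sup>2)) + ennreal (c * \<sigma>\<^sup>2 * (real t * (a (Suc j))\<^sup>2))"
      proof -
        have "ennreal (k j) * ennreal (c * real n * (\<zeta>\<^sup>2 + \<sigma>\<^sup>2)) = ennreal (k j * (c * real n * (\<zeta>\<^sup>2 + \<sigma>\<^sup>2)))"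
          using k0 c0 by (simp add: ennreal_mult)
        also have "k j * (c * real n * (\<zeta>\<^sup>2 + \<sigma>\<^sup>2)) = c * \<zeta>\<^sup>2 * (real t * (a (Suc j))\<^sup>2) + c * \<sigma>\<^sup>2 * (real t * (a (Suc j))\<^sup>2)"
          using n0 by (simp add: k_def field_simps)
        finally show ?thesis using c0 by (simp add: ennreal_plus)
      qed
      have e2: "ennreal (k j) * (ennreal (2 * L * c * real n) * B j) = ennreal (2 * L * c) * (ennreal (real t) * (ennreal ((a (Suc j))\<^sup>2) * B j))"
      proof -
        have "ennreal (k j) * ennreal (2 * L * c * real n) = ennreal (k j * (2 * L * c * real n))"
          using k0 c0 L0 by (simp add: ennreal_mult)
        also have "k j * (2 * L * c * real n) = (2 * L * c) * (real t * (a (Suc j))\<^sup>2)"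
          using n0 by (simp add: k_def field_simps)
        also have "ennreal \<dots> = ennreal (2 * L * c) * (ennreal (real t) * ennreal ((a (Suc j))\<^sup>2))"
          using c0 L0 by (simp add: ennreal_mult)
        finally show ?thesis by (simp add: mult_ac)
      qed
      show "ennreal (k j) * (ennreal (c * real n * (\<zeta>\<^sup>2 + \<sigma>\<^sup>2)) + ennreal (2 * L * c * real n) * B j)
          = ennreal (c * \<zeta>\<^sup>2 * (real t * (a (Suc j))\<^sup>2))
          + ennreal (2 * L * c) * (ennreal (real t) * (ennreal ((a (Suc j))\<^sup>2) * B j))
          + ennreal (c * \<sigma>\<^sup>2 * (real t * (a (Suc j))\<^sup>2))"
        unfolding distrib_left[of "ennreal (k j)"] e1 e2 by (simp only: add.assoc add.commute[of "ennreal (2 * L * c) * _"])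
    qed
    also have "\<dots> = ennreal (c * \<zeta>\<^sup>2 * (real t * (\<Sum>j<t. (a (Suc j))\<^sup>2)))
       + ennreal (2 * L * c) * (ennreal (real t) * (\<Sum>j<t. ennreal ((a (Suc j))\<^sup>2) * B j))
       + ennreal (c * \<sigma>\<^sup>2 * (real t * (\<Sum>j<t. (a (Suc j))\<^sup>2)))"
    proof -
      have s1: "(\<Sum>j<t. ennreal (c * \<zeta>\<^sup>2 * (real t * (a (Suc j))\<^sup>2))) = ennreal (c * \<zeta>\<^sup>2 * (real t * (\<Sum>j<t. (a (Suc j))\<^sup>2)))"
        using c0 by (simp add: sum_distrib_left)
      have s3: "(\<Sum>j<t. ennreal (c * \<sigma>\<^sup>2 * (real t * (a (Suc j))\<^sup>2))) = ennreal (c * \<sigma>\<^sup>2 * (real t * (\<Sum>j<t. (a (Suc j))\<^sup>2)))"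
        using c0 by (simp add: sum_distrib_left)
      show ?thesis unfolding sum.distrib s1 s3 by (simp add: sum_distrib_left)
    qed
    finally show ?thesis .
  qed
  have "(\<Sum>t<T. ennreal (w (Suc t)) *
       (\<integral>\<^sup>+ \<omega>. ennreal ((norm (\<Sum>j<t. a (Suc j) *\<^sub>R
            ((1 / real n) *\<^sub>R (\<Sum>i<n. neo_g n g C R a A0 x0 v0 (\<lambda>i t. \<xi> i t \<omega>) (\<lambda>i t. s i t \<omega>) i j)
             - (1 / real n) *\<^sub>R (\<Sum>i<n. neo_ghat n g C R a A0 x0 v0 (\<lambda>i t. \<xi> i t \<omega>) (\<lambda>i t. s i t \<omega>) i j))))\<^sup>2) \<partial>M))
    \<le> (\<Sum>t<T. ennreal (w (Suc t)) * (ennreal (c * \<zeta>\<^sup>2 * (real t * (\<Sum>j<t. (a (Suc j))\<^sup>2)))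
       + ennreal (2 * L * c) * (ennreal (real t) * (\<Sum>j<t. ennreal ((a (Suc j))\<^sup>2) * B j))
       + ennreal (c * \<sigma>\<^sup>2 * (real t * (\<Sum>j<t. (a (Suc j))\<^sup>2)))))"
    by (intro sum_mono mult_left_mono trm) auto
  also have "\<dots> = (\<Sum>t<T. ennreal (c * \<zeta>\<^sup>2 * (w (Suc t) * real t * (\<Sum>j<t. (a (Suc j))\<^sup>2)))
       + ennreal (2 * L * c) * (ennreal (w (Suc t) * real t) * (\<Sum>j<t. ennreal ((a (Suc j))\<^sup>2) * B j))
       + ennreal (c * \<sigma>\<^sup>2 * (w (Suc t) * real t * (\<Sum>j<t. (a (Suc j))\<^sup>2))))"
  proof (intro sum.cong refl)
    fix t assume "t \<in> {..<T}"
    then have w0: "0 \<le> w (Suc t)" using w_nonneg[of "Suc t"] by simp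
    have S0: "0 \<le> (\<Sum>j<t. (a (Suc j))\<^sup>2)" by (simp add: sum_nonneg)
    have f1: "ennreal (w (Suc t)) * ennreal (c * \<zeta>\<^sup>2 * (real t * (\<Sum>j<t. (a (Suc j))\<^sup>2))) = ennreal (c * \<zeta>\<^sup>2 * (w (Suc t) * real t * (\<Sum>j<t. (a (Suc j))\<^sup>2)))"
      using w0 c0 S0 by (simp add: ennreal_mult[symmetric] mult_ac)
    have f3: "ennreal (w (Suc t)) * ennreal (c * \<sigma>\<^sup>2 * (real t * (\<Sum>j<t. (a (Suc j))\<^sup>2))) = ennreal (c * \<sigma>\<^sup>2 * (w (Suc t) * real t * (\<Sum>j<t. (a (Suc j))\<^sup>2)))"
      using w0 c0 S0 by (simp add: ennreal_mult[symmetric] mult_ac)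
    have f2: "ennreal (w (Suc t)) * (ennreal (2 * L * c) * (ennreal (real t) * X)) = ennreal (2 * L * c) * (ennreal (w (Suc t) * real t) * X)" for X
      using w0 by (simp add: ennreal_mult mult_ac)
    show "ennreal (w (Suc t)) * (ennreal (c * \<zeta>\<^sup>2 * (real t * (\<Sum>j<t. (a (Suc j))\<^sup>2)))
       + ennreal (2 * L * c) * (ennreal (real t) * (\<Sum>j<t. ennreal ((a (Suc j))\<^sup>2) * B j))
       + ennreal (c * \<sigma>\<^sup>2 * (real t * (\<Sum>j<t. (a (Suc j))\<^sup>2))))
      = ennreal (c * \<zeta>\<^sup>2 * (w (Suc t) * real t * (\<Sum>j<t. (a (Suc j))\<^sup>2)))
       + ennreal (2 * L * c) * (ennreal (w (Suc t) * real t) * (\<Sum>j<t. ennreal ((a (Suc j))\<^sup>2) * B j))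
       + ennreal (c * \<sigma>\<^sup>2 * (w (Suc t) * real t * (\<Sum>j<t. (a (Suc j))\<^sup>2)))"
      unfolding distrib_left f1 f2 f3 ..
  qed
  also have "\<dots> = ennreal (c * \<zeta>\<^sup>2 * (\<Sum>t<T. w (Suc t) * real t * (\<Sum>j<t. (a (Suc j))\<^sup>2)))
      + ennreal (2 * L * c) * (\<Sum>t<T. ennreal (w (Suc t) * real t) * (\<Sum>j<t. ennreal ((a (Suc j))\<^sup>2) * B j))
      + ennreal (c * \<sigma>\<^sup>2 * (\<Sum>t<T. w (Suc t) * real t * (\<Sum>j<t. (a (Suc j))\<^sup>2)))"
  proof -
    have nn: "\<And>t. t \<in> {..<T} \<Longrightarrow> 0 \<le> w (Suc t) * real t * (\<Sum>j<t. (a (Suc j))\<^sup>2)"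
      using w_nonneg by (auto intro!: mult_nonneg_nonneg sum_nonneg)
    have s1: "(\<Sum>t<T. ennreal (c * \<zeta>\<^sup>2 * (w (Suc t) * real t * (\<Sum>j<t. (a (Suc j))\<^sup>2)))) = ennreal (c * \<zeta>\<^sup>2 * (\<Sum>t<T. w (Suc t) * real t * (\<Sum>j<t. (a (Suc j))\<^sup>2)))"
    proof -
      have "(\<Sum>t<T. ennreal (c * \<zeta>\<^sup>2 * (w (Suc t) * real t * (\<Sum>j<t. (a (Suc j))\<^sup>2)))) = ennreal (\<Sum>t<T. c * \<zeta>\<^sup>2 * (w (Suc t) * real t * (\<Sum>j<t. (a (Suc j))\<^sup>2)))"
        by (rule sum_ennreal) (use c0 nn in \<open>auto intro!: mult_nonneg_nonneg\<close>)
      then show ?thesis by (simp only: sum_distrib_left[symmetric])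
    qed
    have s3: "(\<Sum>t<T. ennreal (c * \<sigma>\<^sup>2 * (w (Suc t) * real t * (\<Sum>j<t. (a (Suc j))\<^sup>2)))) = ennreal (c * \<sigma>\<^sup>2 * (\<Sum>t<T. w (Suc t) * real t * (\<Sum>j<t. (a (Suc j))\<^sup>2)))"
    proof -
      have "(\<Sum>t<T. ennreal (c * \<sigma>\<^sup>2 * (w (Suc t) * real t * (\<Sum>j<t. (a (Suc j))\<^sup>2)))) = ennreal (\<Sum>t<T. c * \<sigma>\<^sup>2 * (w (Suc t) * real t * (\<Sum>j<t. (a (Suc j))\<^sup>2)))"
        by (rule sum_ennreal) (use c0 nn in \<open>auto intro!: mult_nonneg_nonneg\<close>)
      then show ?thesis by (simp only: sum_distrib_left[symmetric])
    qed
    show ?thesis unfolding sum.distrib s1 s3 by (simp add: sum_distrib_left)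
  qed
  finally show ?thesis unfolding c_def B_def Y_def
    by (simp add: ennreal_mult mult_ac)
qed

end
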